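(* Let $n\ge1$, $L>0$, $D\subseteq\mathbb{R}$ compact, and consider an $n$-qubit system with dynamics $\rho_k=T(u_k)\rho_{k-1}$ and output $\bar y_k=h(\rho_k)$, where $h(\rho)$ is a real polynomial (of some degree $R$, with constant term) in the variables $\langle Z^{(i)}\rangle={\rm Tr}(\rho Z^{(i)})$, $i=1,\dots,n$. Suppose that (i) there is $0<\epsilon\le1$ with $\sup_{A\in H_0(2^n),A\ne0}\|T(x)A\|_2/\|A\|_2\le1-\epsilon$ for all $x\in D\cap[-L,L]$, and (ii) $T$ is continuous in the sense that for every $\epsilon'>0$ there is $\delta_T(\epsilon')>0$ with $\|T(x)-T(y)\|_{2-2}<\epsilon'$ whenever $x,y\in D\cap[-L,L]$ and $|x-y|<\delta_T(\epsilon')$. Then for any null sequence $w$, the induced filter $M^T$ and its corresponding functional $F^T$ are $w$-fading memory.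
   Context: $T(x)$, $x\in D\cap[-L,L]$, are CPTP maps on $2^n\times 2^n$ complex matrices; $H_0(2^n)$ is the space of traceless Hermitian $2^n\times2^n$ matrices; $\|\cdot\|_2$ is the Schatten 2-norm and $\|S\|_{2-2}=\sup_{\|A\|_2=1}\|SA\|_2$ over all complex $2^n\times2^n$ matrices $A$. $Z^{(i)}$ is the Pauli $Z$ operator acting on qubit $i$. $K_L(D)$: real sequences $\{u_k\}_{k\in\mathbb{Z}}$ with values in $D\cap[-L,L]$; $K_L^-(D)$: same indexed by $\mathbb{Z}^-=\{\dots,-1,0\}$. The induced filter is $M^T(u)_k=h\big(\lim_{N\to\infty}T(u_k)\cdots T(u_{k-N})\rho_{-N}\big)$ (the limit exists and is independent of the density operators $\rho_{-N}$ under (i)); its functional is $F^T(u_-)=M^T(u)_0$ for any $u$ extending $u_-\in K_L^-(D)$. A null sequence is a decreasing $w:\{0,1,\dots\}\to(0,1]$ with $w_k\to0$; $\|u\|_w=\sup_{k\le0}|u_k|w_{-k}$. A time-invariant causal filter is $w$-fading memory iff its functional is continuous on $(K_L^-(D),\|\cdot\|_w)$. *)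

theory Defs
  imports "HOL-Analysis.Analysis"
begin

text \<open>Complex square matrices of size N are represented as functions
  nat => nat => complex that vanish outside the index block [0,N) x [0,N).\<close>

type_synonym cmat = "nat \<Rightarrow> nat \<Rightarrow> complex"

definition sq_mat :: "nat \<Rightarrow> cmat \<Rightarrow> bool" where
  "sq_mat N A \<longleftrightarrow> (\<forall>i j. \<not> (i < N \<and> j < N) \<longrightarrow> A i j = 0)"

definition mtrace :: "nat \<Rightarrow> cmat \<Rightarrow> complex" where
  "mtrace N A = (\<Sum>i<N. A i i)"

definition mmult :: "nat \<Rightarrow> cmat \<Rightarrow> cmat \<Rightarrow> cmat" where
  "mmult N A B = (\<lambda>i j. if i < N \<and> j < N then (\<Sum>k<N. A i k * B k j) else 0)"

definition madj :: "cmat \<Rightarrow> cmat" where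
  "madj A = (\<lambda>i j. cnj (A j i))"

definition hermitian :: "nat \<Rightarrow> cmat \<Rightarrow> bool" where
  "hermitian N A \<longleftrightarrow> sq_mat N A \<and> madj A = A"

definition psd :: "nat \<Rightarrow> cmat \<Rightarrow> bool" where
  "psd N A \<longleftrightarrow> hermitian N A \<and>
     (\<forall>v :: nat \<Rightarrow> complex. 0 \<le> Re (\<Sum>i<N. \<Sum>j<N. cnj (v i) * A i j * v j))"

definition density :: "nat \<Rightarrow> cmat \<Rightarrow> bool" where
  "density N \<rho> \<longleftrightarrow> psd N \<rho> \<and> mtrace N \<rho> = 1"

definition hs_norm :: "nat \<Rightarrow> cmat \<Rightarrow> real" where
  "hs_norm N A = sqrt (\<Sum>i<N. \<Sum>j<N. (cmod (A i j))\<^sup>2)"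

definition op22 :: "nat \<Rightarrow> (cmat \<Rightarrow> cmat) \<Rightarrow> real" where
  "op22 N S = Sup {hs_norm N (S A) | A. sq_mat N A \<and> hs_norm N A = 1}"

text \<open>(id_k tensor Phi) applied to a kN x kN matrix viewed as a k x k block
  matrix of N x N blocks.\<close>
definition block_apply :: "nat \<Rightarrow> nat \<Rightarrow> (cmat \<Rightarrow> cmat) \<Rightarrow> cmat \<Rightarrow> cmat" where
  "block_apply N k \<Phi> X = (\<lambda>i j. if i < k * N \<and> j < k * N then
      \<Phi> (\<lambda>p q. if p < N \<and> q < N then X ((i div N) * N + p) ((j div N) * N + q) else 0)
        (i mod N) (j mod N)
    else 0)"

definition cptp :: "nat \<Rightarrow> (cmat \<Rightarrow> cmat) \<Rightarrow> bool" where
  "cptp N \<Phi> \<longleftrightarrow>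
     (\<forall>A. sq_mat N A \<longrightarrow> sq_mat N (\<Phi> A)) \<and>
     (\<forall>A B. sq_mat N A \<longrightarrow> sq_mat N B \<longrightarrow>
        \<Phi> (\<lambda>i j. A i j + B i j) = (\<lambda>i j. \<Phi> A i j + \<Phi> B i j)) \<and>
     (\<forall>c A. sq_mat N A \<longrightarrow> \<Phi> (\<lambda>i j. c * A i j) = (\<lambda>i j. c * \<Phi> A i j)) \<and>
     (\<forall>A. sq_mat N A \<longrightarrow> mtrace N (\<Phi> A) = mtrace N A) \<and>
     (\<forall>k X. psd (k * N) X \<longrightarrow> psd (k * N) (block_apply N k \<Phi> X))"

text \<open>Pauli Z on qubit i (1 <= i <= n) of an n-qubit system; basis index j,
  qubit 1 is the most significant bit.\<close>
definition pauliZ :: "nat \<Rightarrow> nat \<Rightarrow> cmat" where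
  "pauliZ n i = (\<lambda>j l. if j < 2 ^ n \<and> l < 2 ^ n \<and> j = l
      then (if bit j (n - i) then -1 else 1) else 0)"

definition expZ :: "nat \<Rightarrow> cmat \<Rightarrow> nat \<Rightarrow> real" where
  "expZ n \<rho> i = Re (mtrace (2 ^ n) (mmult (2 ^ n) \<rho> (pauliZ n i)))"

definition monomials_upto :: "nat \<Rightarrow> nat \<Rightarrow> (nat \<Rightarrow> nat) set" where
  "monomials_upto n R = {\<alpha>. (\<forall>i. i \<notin> {1..n} \<longrightarrow> \<alpha> i = 0) \<and> sum \<alpha> {1..n} \<le> R}"

definition hpoly :: "nat \<Rightarrow> nat \<Rightarrow> ((nat \<Rightarrow> nat) \<Rightarrow> real) \<Rightarrow> cmat \<Rightarrow> real" where
  "hpoly n R c \<rho> = (\<Sum>\<alpha>\<in>monomials_upto n R. c \<alpha> * (\<Prod>i\<in>{1..n}. expZ n \<rho> i ^ \<alpha> i))"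

text \<open>T(u_k) T(u_{k-1}) ... T(u_{k-m}) rho.\<close>
fun propagate :: "(real \<Rightarrow> cmat \<Rightarrow> cmat) \<Rightarrow> (int \<Rightarrow> real) \<Rightarrow> int \<Rightarrow> nat \<Rightarrow> cmat \<Rightarrow> cmat" where
  "propagate T u k 0 \<rho> = T (u k) \<rho>"
| "propagate T u k (Suc m) \<rho> = propagate T u k m (T (u (k - int (Suc m))) \<rho>)"

definition mat_lim :: "nat \<Rightarrow> (nat \<Rightarrow> cmat) \<Rightarrow> cmat \<Rightarrow> bool" where
  "mat_lim N S \<sigma> \<longleftrightarrow> (\<forall>i<N. \<forall>j<N. (\<lambda>m. S m i j) \<longlonglongrightarrow> \<sigma> i j)"

definition limit_state :: "nat \<Rightarrow> (real \<Rightarrow> cmat \<Rightarrow> cmat) \<Rightarrow> (int \<Rightarrow> real) \<Rightarrow> int \<Rightarrow> cmat" where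
  "limit_state N T u k = (THE \<sigma>. sq_mat N \<sigma> \<and>
     (\<forall>\<rho>s. (\<forall>m. density N (\<rho>s m)) \<longrightarrow> mat_lim N (\<lambda>m. propagate T u k m (\<rho>s m)) \<sigma>))"

definition filterM :: "nat \<Rightarrow> nat \<Rightarrow> ((nat \<Rightarrow> nat) \<Rightarrow> real) \<Rightarrow> (real \<Rightarrow> cmat \<Rightarrow> cmat)
    \<Rightarrow> (int \<Rightarrow> real) \<Rightarrow> int \<Rightarrow> real" where
  "filterM n R c T u k = hpoly n R c (limit_state (2 ^ n) T u k)"

definition functionalF :: "nat \<Rightarrow> nat \<Rightarrow> ((nat \<Rightarrow> nat) \<Rightarrow> real) \<Rightarrow> (real \<Rightarrow> cmat \<Rightarrow> cmat)
    \<Rightarrow> (int \<Rightarrow> real) \<Rightarrow> real" where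
  "functionalF n R c T u = filterM n R c T u 0"

text \<open>K_L^-(D): left-infinite sequences indexed by k <= 0 (set to 0 for k > 0).\<close>
definition KLminus :: "real \<Rightarrow> real set \<Rightarrow> (int \<Rightarrow> real) set" where
  "KLminus L D = {u. (\<forall>k\<le>0. u k \<in> D \<inter> {-L..L}) \<and> (\<forall>k>0. u k = 0)}"

definition null_sequence :: "(nat \<Rightarrow> real) \<Rightarrow> bool" where
  "null_sequence w \<longleftrightarrow> decseq w \<and> (\<forall>k. 0 < w k \<and> w k \<le> 1) \<and> w \<longlonglongrightarrow> 0"

definition wnorm :: "(nat \<Rightarrow> real) \<Rightarrow> (int \<Rightarrow> real) \<Rightarrow> real" where
  "wnorm w u = (SUP k\<in>{..0::int}. \<bar>u k\<bar> * w (nat (- k)))"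

definition w_fading_memory :: "(nat \<Rightarrow> real) \<Rightarrow> real \<Rightarrow> real set \<Rightarrow> ((int \<Rightarrow> real) \<Rightarrow> real) \<Rightarrow> bool" where
  "w_fading_memory w L D F \<longleftrightarrow>
     (\<forall>u\<in>KLminus L D. \<forall>e>0. \<exists>d>0. \<forall>v\<in>KLminus L D.
        wnorm w (\<lambda>k. u k - v k) < d \<longrightarrow> \<bar>F u - F v\<bar> < e)"

end

theory Submission
  imports Defs
begin



lemma hs_L2: "hs_norm N A = L2_set (\<lambda>p. cmod (A (fst p) (snd p))) ({..<N} \<times> {..<N})"
  unfolding hs_norm_def L2_set_def by (simp add: sum.cartesian_product case_prod_beta)

lemma hs_nonneg: "0 \<le> hs_norm N A"
  unfolding hs_norm_def by (simp add: sum_nonneg)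

lemma hs_entry: "i < N \<Longrightarrow> j < N \<Longrightarrow> cmod (A i j) \<le> hs_norm N A"
  unfolding hs_L2 using member_le_L2_set[of "{..<N} \<times> {..<N}" "(i,j)" "\<lambda>p. cmod (A (fst p) (snd p))"]
  by simp

lemma hs_add: "hs_norm N (\<lambda>i j. A i j + B i j) \<le> hs_norm N A + hs_norm N B"
proof -
  have "hs_norm N (\<lambda>i j. A i j + B i j) \<le> L2_set (\<lambda>p. cmod (A (fst p) (snd p)) + cmod (B (fst p) (snd p))) ({..<N} \<times> {..<N})"
    unfolding hs_L2 by (rule L2_set_mono) (auto intro: norm_triangle_ineq)
  also have "\<dots> \<le> hs_norm N A + hs_norm N B"
    unfolding hs_L2 by (rule L2_set_triangle_ineq)
  finally show ?thesis .
qed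

lemma hs_diff_tri: "hs_norm N (\<lambda>i j. A i j - C i j) \<le> hs_norm N (\<lambda>i j. A i j - B i j) + hs_norm N (\<lambda>i j. B i j - C i j)"
  using hs_add[of N "\<lambda>i j. A i j - B i j" "\<lambda>i j. B i j - C i j"] by simp

lemma hs_scale: "hs_norm N (\<lambda>i j. c * A i j) = cmod c * hs_norm N A"
  unfolding hs_L2 by (simp add: L2_set_right_distrib norm_mult)

lemma hs_diff_sym: "hs_norm N (\<lambda>i j. A i j - B i j) = hs_norm N (\<lambda>i j. B i j - A i j)"
  unfolding hs_norm_def by (simp add: norm_minus_commute)

lemma hs_sub_le: "hs_norm N (\<lambda>i j. A i j - B i j) \<le> hs_norm N A + hs_norm N B"
  using hs_add[of N A "\<lambda>i j. (-1) * B i j"] hs_scale[of N "-1" B] by simp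

lemma hs_zero: "hs_norm N (\<lambda>i j. 0) = 0"
  unfolding hs_norm_def by simp

lemma hs_pos: "sq_mat N A \<Longrightarrow> A \<noteq> (\<lambda>i j. 0) \<Longrightarrow> 0 < hs_norm N A"
proof -
  assume sq: "sq_mat N A" and nz: "A \<noteq> (\<lambda>i j. 0)"
  then obtain i j where "A i j \<noteq> 0" by (meson ext)
  with sq have ij: "i < N" "j < N" unfolding sq_mat_def by blast+
  have "0 < cmod (A i j)" using \<open>A i j \<noteq> 0\<close> by simp
  also have "\<dots> \<le> hs_norm N A" by (rule hs_entry[OF ij])
  finally show ?thesis .
qed




lemma sum_two_pts:
  fixes g :: "nat \<Rightarrow> complex"
  assumes "i < N" "j < N" "i \<noteq> j"
  shows "(\<Sum>b<N. g b * (if b = i then 1 else if b = j then z else 0)) = g i + g j * z"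
proof -
  have "(\<Sum>b<N. g b * (if b = i then 1 else if b = j then z else 0))
      = (\<Sum>b<N. (if b = i then g b else 0) + (if b = j then g b * z else 0))"
    by (rule sum.cong) (use assms in auto)
  also have "\<dots> = g i + g j * z" using assms by (simp add: sum.distrib)
  finally show ?thesis .
qed

lemma sum_two_pts_l:
  fixes g :: "nat \<Rightarrow> complex"
  assumes "i < N" "j < N" "i \<noteq> j"
  shows "(\<Sum>b<N. (if b = i then 1 else if b = j then z else 0) * g b) = g i + z * g j"
  using sum_two_pts[OF assms, of g z] by (simp add: mult.commute)

lemma sum_one_pt:
  fixes g :: "nat \<Rightarrow> complex"
  assumes "i < N"
  shows "(\<Sum>b<N. g b * (if b = i then 1 else 0)) = g i"
proof -
  have "(\<Sum>b<N. g b * (if b = i then 1 else 0)) = (\<Sum>b<N. (if b = i then g b else 0))"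
    by (rule sum.cong) auto
  then show ?thesis using assms by simp
qed

lemma density_sq: "density N \<rho> \<Longrightarrow> sq_mat N \<rho>"
  unfolding density_def psd_def hermitian_def by blast

lemma density_herm: "density N \<rho> \<Longrightarrow> \<rho> j i = cnj (\<rho> i j)"
proof -
  assume "density N \<rho>"
  then have "madj \<rho> = \<rho>" unfolding density_def psd_def hermitian_def by blast
  then have "cnj (\<rho> i j) = \<rho> j i" unfolding madj_def by metis
  then show ?thesis by simp
qed

lemma density_qf: "density N \<rho> \<Longrightarrow> 0 \<le> Re (\<Sum>i<N. \<Sum>j<N. cnj (v i) * \<rho> i j * v j)"
  unfolding density_def psd_def by blast

lemma density_diag_nonneg:
  assumes d: "density N \<rho>" and i: "i < N"
  shows "0 \<le> Re (\<rho> i i)"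
proof -
  define v where "v = (\<lambda>k::nat. if k = i then (1::complex) else 0)"
  have "(\<Sum>a<N. \<Sum>b<N. cnj (v a) * \<rho> a b * v b) = (\<Sum>a<N. cnj (v a) * \<rho> a i)"
    by (rule sum.cong) (simp_all add: v_def sum_one_pt[OF i])
  also have "\<dots> = (\<Sum>a<N. \<rho> a i * v a)" by (rule sum.cong) (auto simp: v_def)
  also have "\<dots> = \<rho> i i" unfolding v_def by (rule sum_one_pt[OF i])
  finally show ?thesis using density_qf[OF d, of v] by simp
qed

lemma density_diag_real: "density N \<rho> \<Longrightarrow> Im (\<rho> i i) = 0"
  using density_herm[of N \<rho> i i] by (metis cnj.sel(2) neg_equal_zero)

lemma density_diag_le1:
  assumes d: "density N \<rho>" and i: "i < N"
  shows "Re (\<rho> i i) \<le> 1"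
proof -
  have "mtrace N \<rho> = 1" using d unfolding density_def by blast
  then have "(\<Sum>k<N. Re (\<rho> k k)) = 1" unfolding mtrace_def by (metis Re_sum one_complex.sel(1))
  moreover have "Re (\<rho> i i) \<le> (\<Sum>k<N. Re (\<rho> k k))"
    by (rule member_le_sum) (use i density_diag_nonneg[OF d] in auto)
  ultimately show ?thesis by simp
qed



lemma density_offdiag:
  assumes d: "density N \<rho>" and i: "i < N" and j: "j < N" and ij: "i \<noteq> j"
  shows "2 * cmod (\<rho> i j) \<le> Re (\<rho> i i) + Re (\<rho> j j)"
proof (cases "\<rho> i j = 0")
  case True
  then show ?thesis using density_diag_nonneg[OF d i] density_diag_nonneg[OF d j] by simp
next
  case False
  define a where "a = \<rho> i j"
  define z where "z = - cnj a / of_real (cmod a)"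
  define v where "v = (\<lambda>k::nat. if k = i then (1::complex) else if k = j then z else 0)"
  have cv: "cnj (v k) = (if k = i then 1 else if k = j then cnj z else 0)" for k
    unfolding v_def by auto
  have "(\<Sum>a<N. \<Sum>b<N. cnj (v a) * \<rho> a b * v b) = (\<Sum>a<N. cnj (v a) * (\<rho> a i + \<rho> a j * z))"
  proof (rule sum.cong)
    fix x assume "x \<in> {..<N}"
    have "(\<Sum>b<N. cnj (v x) * \<rho> x b * v b) = cnj (v x) * (\<Sum>b<N. \<rho> x b * v b)"
      by (simp add: sum_distrib_left mult.assoc)
    also have "(\<Sum>b<N. \<rho> x b * v b) = \<rho> x i + \<rho> x j * z"
      unfolding v_def by (rule sum_two_pts[OF i j ij])
    finally show "(\<Sum>b<N. cnj (v x) * \<rho> x b * v b) = cnj (v x) * (\<rho> x i + \<rho> x j * z)" .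
  qed simp
  also have "\<dots> = (\<Sum>a<N. (if a = i then 1 else if a = j then cnj z else 0) * (\<rho> a i + \<rho> a j * z))"
    by (simp add: cv)
  also have "\<dots> = (\<rho> i i + \<rho> i j * z) + cnj z * (\<rho> j i + \<rho> j j * z)"
    by (rule sum_two_pts_l[OF i j ij])
  finally have eq: "(\<Sum>a<N. \<Sum>b<N. cnj (v a) * \<rho> a b * v b) = (\<rho> i i + \<rho> i j * z) + cnj z * (\<rho> j i + \<rho> j j * z)" .
  have an: "cmod a \<noteq> 0" using False a_def by simp
  have acn: "a * cnj a = of_real (cmod a) * of_real (cmod a)"
    by (metis complex_norm_square of_real_mult power2_eq_square)
  have an': "(of_real (cmod a) :: complex) \<noteq> 0" using an by simp
  have az: "a * z = - of_real (cmod a)"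
  proof -
    have "a * z = - (a * cnj a) / of_real (cmod a)" unfolding z_def by simp
    also have "\<dots> = - of_real (cmod a)" using an' unfolding acn by simp
    finally show ?thesis .
  qed
  have zz: "cnj z * z = 1"
  proof -
    have "cnj z * z = (a * cnj a) / (of_real (cmod a) * of_real (cmod a))" unfolding z_def by (simp add: mult.commute)
    also have "\<dots> = 1" using an' unfolding acn by simp
    finally show ?thesis .
  qed
  have ji: "\<rho> j i = cnj a" unfolding a_def by (rule density_herm[OF d])
  have "cnj z * \<rho> j i = cnj (a * z)" using ji by simp
  also have "\<dots> = - of_real (cmod a)" using az by simp
  finally have zji: "cnj z * \<rho> j i = - of_real (cmod a)" .
  have "cnj z * (\<rho> j i + \<rho> j j * z) = cnj z * \<rho> j i + \<rho> j j * (cnj z * z)" by (simp add: algebra_simps)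
  then have "(\<rho> i i + \<rho> i j * z) + cnj z * (\<rho> j i + \<rho> j j * z) = \<rho> i i + \<rho> j j - 2 * of_real (cmod a)"
    using zji zz az a_def by simp
  with eq density_qf[OF d, of v] show ?thesis using a_def by simp
qed



lemma density_entry_le1:
  assumes d: "density N \<rho>" and i: "i < N" and j: "j < N"
  shows "cmod (\<rho> i j) \<le> 1"
proof (cases "i = j")
  case True
  have "\<rho> i i = of_real (Re (\<rho> i i))" using density_diag_real[OF d, of i] by (simp add: complex_eq_iff)
  then have "cmod (\<rho> i i) = \<bar>Re (\<rho> i i)\<bar>" by (metis norm_of_real)
  then show ?thesis using True density_diag_nonneg[OF d i] density_diag_le1[OF d i] by simp
next
  case False
  then show ?thesis using density_offdiag[OF d i j False] density_diag_le1[OF d i] density_diag_le1[OF d j] by simp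
qed

lemma density_hs_le: "density N \<rho> \<Longrightarrow> hs_norm N \<rho> \<le> real N"
proof -
  assume d: "density N \<rho>"
  have "hs_norm N \<rho> \<le> sqrt (\<Sum>i<N. \<Sum>j<N. 1)"
    unfolding hs_norm_def
    by (intro real_sqrt_le_mono sum_mono) (simp add: density_entry_le1[OF d] power_le_one)
  also have "\<dots> = real N" by simp
  finally show ?thesis .
qed

lemma density_dist: "density N \<rho> \<Longrightarrow> density N \<sigma> \<Longrightarrow> hs_norm N (\<lambda>i j. \<rho> i j - \<sigma> i j) \<le> 2 * real N"
  using hs_sub_le[of N \<rho> \<sigma>] density_hs_le[of N \<rho>] density_hs_le[of N \<sigma>] by simp

definition E00 :: cmat where "E00 = (\<lambda>i j. if i = 0 \<and> j = 0 then 1 else 0)"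

lemma E00_density: "N \<ge> 1 \<Longrightarrow> density N E00"
proof -
  assume N: "N \<ge> 1"
  have sq: "sq_mat N E00" unfolding sq_mat_def E00_def using N by auto
  have h: "madj E00 = E00" unfolding madj_def E00_def by (auto intro!: ext)
  have "(\<Sum>i<N. \<Sum>j<N. cnj (v i) * E00 i j * v j) = cnj (v 0) * v 0" for v
  proof -
    have "(\<Sum>i<N. \<Sum>j<N. cnj (v i) * E00 i j * v j) = (\<Sum>i<N. if i = 0 then cnj (v 0) * v 0 else 0)"
    proof (rule sum.cong)
      fix i assume "i \<in> {..<N}"
      show "(\<Sum>j<N. cnj (v i) * E00 i j * v j) = (if i = 0 then cnj (v 0) * v 0 else 0)"
      proof (cases "i = 0")
        case True
        have "(\<Sum>j<N. cnj (v i) * E00 i j * v j) = (\<Sum>j<N. if j = 0 then cnj (v 0) * v 0 else 0)"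
          by (rule sum.cong) (auto simp: E00_def True)
        then show ?thesis using N True by simp
      qed (simp add: E00_def)
    qed simp
    then show ?thesis using N by simp
  qed
  moreover have "0 \<le> Re (cnj (v 0) * v 0)" for v :: "nat \<Rightarrow> complex"
    by (metis Re_complex_of_real complex_norm_square mult.commute zero_le_power2)
  moreover have "mtrace N E00 = 1" unfolding mtrace_def E00_def using N by (simp add: if_distrib cong: if_cong)
  ultimately show ?thesis unfolding density_def psd_def hermitian_def using sq h by simp
qed




lemma cptp_sq: "cptp N \<Phi> \<Longrightarrow> sq_mat N A \<Longrightarrow> sq_mat N (\<Phi> A)"
  unfolding cptp_def by blast

lemma cptp_add: "cptp N \<Phi> \<Longrightarrow> sq_mat N A \<Longrightarrow> sq_mat N B \<Longrightarrow>
   \<Phi> (\<lambda>i j. A i j + B i j) = (\<lambda>i j. \<Phi> A i j + \<Phi> B i j)"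
  unfolding cptp_def by blast

lemma cptp_scale: "cptp N \<Phi> \<Longrightarrow> sq_mat N A \<Longrightarrow> \<Phi> (\<lambda>i j. c * A i j) = (\<lambda>i j. c * \<Phi> A i j)"
  unfolding cptp_def by blast

lemma sq_zero: "sq_mat N (\<lambda>i j. 0)" unfolding sq_mat_def by simp

lemma sq_scale: "sq_mat N A \<Longrightarrow> sq_mat N (\<lambda>i j. c * A i j)" unfolding sq_mat_def by simp

lemma sq_add: "sq_mat N A \<Longrightarrow> sq_mat N B \<Longrightarrow> sq_mat N (\<lambda>i j. A i j + B i j)" unfolding sq_mat_def by simp

lemma sq_diff: "sq_mat N A \<Longrightarrow> sq_mat N B \<Longrightarrow> sq_mat N (\<lambda>i j. A i j - B i j)" unfolding sq_mat_def by simp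

lemma sq_sum: "(\<And>p. p \<in> P \<Longrightarrow> sq_mat N (M p)) \<Longrightarrow> sq_mat N (\<lambda>i j. \<Sum>p\<in>P. M p i j)"
  unfolding sq_mat_def by (simp add: sum.neutral)

lemma cptp_zero: "cptp N \<Phi> \<Longrightarrow> \<Phi> (\<lambda>i j. 0) = (\<lambda>i j. 0)"
  using cptp_scale[of N \<Phi> "\<lambda>i j. 0" 0] sq_zero[of N] by simp

lemma cptp_diff: "cptp N \<Phi> \<Longrightarrow> sq_mat N A \<Longrightarrow> sq_mat N B \<Longrightarrow>
   \<Phi> (\<lambda>i j. A i j - B i j) = (\<lambda>i j. \<Phi> A i j - \<Phi> B i j)"
proof -
  assume c: "cptp N \<Phi>" and a: "sq_mat N A" and b: "sq_mat N B"
  have "\<Phi> (\<lambda>i j. A i j - B i j) = \<Phi> (\<lambda>i j. A i j + (\<lambda>i j. (-1) * B i j) i j)" by simp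
  also have "\<dots> = (\<lambda>i j. \<Phi> A i j + \<Phi> (\<lambda>i j. (-1) * B i j) i j)"
    by (rule cptp_add[OF c a sq_scale[OF b]])
  also have "\<dots> = (\<lambda>i j. \<Phi> A i j - \<Phi> B i j)" using cptp_scale[OF c b, of "-1"] by simp
  finally show ?thesis .
qed

lemma cptp_sum: assumes c: "cptp N \<Phi>" shows "finite P \<Longrightarrow> (\<And>p. p \<in> P \<Longrightarrow> sq_mat N (M p)) \<Longrightarrow>
  \<Phi> (\<lambda>i j. \<Sum>p\<in>P. M p i j) = (\<lambda>i j. \<Sum>p\<in>P. \<Phi> (M p) i j)"
proof (induction P rule: finite_induct)
  case empty
  then show ?case using cptp_zero[OF c] by simp
next
  case (insert x F)
  have "\<Phi> (\<lambda>i j. \<Sum>p\<in>insert x F. M p i j) = \<Phi> (\<lambda>i j. M x i j + (\<lambda>i j. \<Sum>p\<in>F. M p i j) i j)"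
    using insert by simp
  also have "\<dots> = (\<lambda>i j. \<Phi> (M x) i j + \<Phi> (\<lambda>i j. \<Sum>p\<in>F. M p i j) i j)"
    by (rule cptp_add[OF c]) (use insert in \<open>auto intro!: sq_sum\<close>)
  also have "\<dots> = (\<lambda>i j. \<Sum>p\<in>insert x F. \<Phi> (M p) i j)" using insert by simp
  finally show ?case .
qed

lemma hs_sum: "hs_norm N (\<lambda>i j. \<Sum>p\<in>P. M p i j) \<le> (\<Sum>p\<in>P. hs_norm N (M p))"
proof (induction P rule: infinite_finite_induct)
  case (infinite A)
  then show ?case by (simp add: hs_zero)
next
  case empty
  then show ?case by (simp add: hs_zero)
next
  case (insert x F)
  have "hs_norm N (\<lambda>i j. \<Sum>p\<in>insert x F. M p i j) = hs_norm N (\<lambda>i j. M x i j + (\<lambda>i j. \<Sum>p\<in>F. M p i j) i j)"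
    using insert by simp
  also have "\<dots> \<le> hs_norm N (M x) + hs_norm N (\<lambda>i j. \<Sum>p\<in>F. M p i j)" by (rule hs_add)
  also have "\<dots> \<le> hs_norm N (M x) + (\<Sum>p\<in>F. hs_norm N (M p))" using insert by simp
  finally show ?case using insert by simp
qed

definition Eb :: "nat \<times> nat \<Rightarrow> cmat" where
  "Eb p = (\<lambda>i j. if i = fst p \<and> j = snd p then 1 else 0)"

lemma sq_Eb: "p \<in> {..<N} \<times> {..<N} \<Longrightarrow> sq_mat N (Eb p)"
  unfolding sq_mat_def Eb_def by auto

lemma expand: "sq_mat N A \<Longrightarrow> A = (\<lambda>i j. \<Sum>p\<in>{..<N} \<times> {..<N}. A (fst p) (snd p) * Eb p i j)"
proof (intro ext)
  fix i j assume sq: "sq_mat N A"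
  have "(\<Sum>p\<in>{..<N} \<times> {..<N}. A (fst p) (snd p) * Eb p i j) = (\<Sum>p\<in>{..<N} \<times> {..<N}. if p = (i, j) then A i j else 0)"
    by (rule sum.cong) (auto simp: Eb_def)
  also have "\<dots> = A i j" using sq unfolding sq_mat_def by auto
  finally show "A i j = (\<Sum>p\<in>{..<N} \<times> {..<N}. A (fst p) (snd p) * Eb p i j)" by simp
qed

lemma cptp_bounded: "cptp N \<Phi> \<Longrightarrow> \<exists>K\<ge>0. \<forall>A. sq_mat N A \<longrightarrow> hs_norm N (\<Phi> A) \<le> K * hs_norm N A"
proof -
  assume c: "cptp N \<Phi>"
  define P where "P = {..<N} \<times> {..<N}"
  define K where "K = (\<Sum>p\<in>P. hs_norm N (\<Phi> (Eb p)))"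
  have K0: "K \<ge> 0" unfolding K_def by (simp add: sum_nonneg hs_nonneg)
  have "hs_norm N (\<Phi> A) \<le> K * hs_norm N A" if sq: "sq_mat N A" for A
  proof -
    have "\<Phi> A = \<Phi> (\<lambda>i j. \<Sum>p\<in>P. (\<lambda>i j. A (fst p) (snd p) * Eb p i j) i j)"
      using expand[OF sq] unfolding P_def by simp
    also have "\<dots> = (\<lambda>i j. \<Sum>p\<in>P. \<Phi> (\<lambda>i j. A (fst p) (snd p) * Eb p i j) i j)"
      by (rule cptp_sum[OF c]) (auto simp: P_def intro!: sq_scale sq_Eb)
    also have "\<dots> = (\<lambda>i j. \<Sum>p\<in>P. A (fst p) (snd p) * \<Phi> (Eb p) i j)"
      by (intro ext sum.cong refl) (simp add: cptp_scale[OF c sq_Eb] P_def)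
    finally have eq: "\<Phi> A = (\<lambda>i j. \<Sum>p\<in>P. A (fst p) (snd p) * \<Phi> (Eb p) i j)" .
    have "hs_norm N (\<Phi> A) \<le> (\<Sum>p\<in>P. hs_norm N (\<lambda>i j. A (fst p) (snd p) * \<Phi> (Eb p) i j))"
      unfolding eq by (rule hs_sum)
    also have "\<dots> = (\<Sum>p\<in>P. cmod (A (fst p) (snd p)) * hs_norm N (\<Phi> (Eb p)))"
      by (simp add: hs_scale)
    also have "\<dots> \<le> (\<Sum>p\<in>P. hs_norm N A * hs_norm N (\<Phi> (Eb p)))"
      by (intro sum_mono mult_right_mono hs_nonneg) (auto simp: P_def intro!: hs_entry)
    also have "\<dots> = K * hs_norm N A" unfolding K_def by (simp add: sum_distrib_left mult.commute)
    finally show ?thesis .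
  qed
  with K0 show ?thesis by blast
qed

lemma op22_bound:
  assumes c1: "cptp N \<Phi>1" and c2: "cptp N \<Phi>2" and sq: "sq_mat N A"
  shows "hs_norm N (\<lambda>i j. \<Phi>1 A i j - \<Phi>2 A i j) \<le> op22 N (\<lambda>A i j. \<Phi>1 A i j - \<Phi>2 A i j) * hs_norm N A"
proof (cases "A = (\<lambda>i j. 0)")
  case True
  then show ?thesis using cptp_zero[OF c1] cptp_zero[OF c2] by (simp add: hs_zero)
next
  case False
  define S where "S = (\<lambda>A i j. \<Phi>1 A i j - \<Phi>2 A i j)"
  obtain K1 where K1: "\<forall>A. sq_mat N A \<longrightarrow> hs_norm N (\<Phi>1 A) \<le> K1 * hs_norm N A"
    using cptp_bounded[OF c1] by blast
  obtain K2 where K2: "\<forall>A. sq_mat N A \<longrightarrow> hs_norm N (\<Phi>2 A) \<le> K2 * hs_norm N A"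
    using cptp_bounded[OF c2] by blast
  have bdd: "bdd_above {hs_norm N (S A) | A. sq_mat N A \<and> hs_norm N A = 1}"
  proof (rule bdd_aboveI)
    fix y assume "y \<in> {hs_norm N (S A) | A. sq_mat N A \<and> hs_norm N A = 1}"
    then obtain B where B: "sq_mat N B" "hs_norm N B = 1" "y = hs_norm N (S B)" by blast
    have "y \<le> hs_norm N (\<Phi>1 B) + hs_norm N (\<Phi>2 B)" unfolding B(3) S_def by (rule hs_sub_le)
    also have "\<dots> \<le> K1 + K2" using K1 K2 B by force
    finally show "y \<le> K1 + K2" .
  qed
  have pos: "0 < hs_norm N A" by (rule hs_pos[OF sq False])
  define c where "c = complex_of_real (1 / hs_norm N A)"
  define A' where "A' = (\<lambda>i j. c * A i j)"
  have sqA': "sq_mat N A'" unfolding A'_def by (rule sq_scale[OF sq])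
  have nA': "hs_norm N A' = 1" unfolding A'_def hs_scale c_def using pos by (simp add: norm_divide)
  have SA': "S A' = (\<lambda>i j. c * S A i j)"
    unfolding S_def A'_def cptp_scale[OF c1 sq] cptp_scale[OF c2 sq] by (simp add: algebra_simps)
  have "hs_norm N (S A') \<le> op22 N S"
    unfolding op22_def by (rule cSup_upper) (use sqA' nA' bdd in auto)
  moreover have "hs_norm N (S A') = hs_norm N (S A) / hs_norm N A"
    unfolding SA' hs_scale c_def using pos by (simp add: norm_divide)
  ultimately have "hs_norm N (S A) / hs_norm N A \<le> op22 N S" by simp
  then show ?thesis unfolding S_def using pos by (simp add: divide_le_eq)
qed




lemma block_apply_1: "sq_mat N \<rho> \<Longrightarrow> sq_mat N (\<Phi> \<rho>) \<Longrightarrow> block_apply N 1 \<Phi> \<rho> = \<Phi> \<rho>"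
proof (intro ext)
  fix i j assume s1: "sq_mat N \<rho>" and s2: "sq_mat N (\<Phi> \<rho>)"
  have inner: "(\<lambda>p q. if p < N \<and> q < N then \<rho> ((i div N) * N + p) ((j div N) * N + q) else 0) = \<rho>"
    if "i < N" "j < N"
    using that s1 unfolding sq_mat_def by (auto intro!: ext)
  show "block_apply N 1 \<Phi> \<rho> i j = \<Phi> \<rho> i j"
    unfolding block_apply_def using inner s2 unfolding sq_mat_def by auto
qed

lemma cptp_density: "cptp N \<Phi> \<Longrightarrow> density N \<rho> \<Longrightarrow> density N (\<Phi> \<rho>)"
proof -
  assume c: "cptp N \<Phi>" and d: "density N \<rho>"
  have s1: "sq_mat N \<rho>" by (rule density_sq[OF d])
  have s2: "sq_mat N (\<Phi> \<rho>)" by (rule cptp_sq[OF c s1])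
  have h: "\<forall>k X. psd (k * N) X \<longrightarrow> psd (k * N) (block_apply N k \<Phi> X)" using c unfolding cptp_def by blast
  have pr: "psd (1 * N) \<rho>" using d unfolding density_def by simp
  have "psd (1 * N) (block_apply N 1 \<Phi> \<rho>)" by (rule h[rule_format, OF pr])
  then have "psd N (\<Phi> \<rho>)" using block_apply_1[of N \<rho> \<Phi>, OF s1 s2] by simp
  moreover have "mtrace N (\<Phi> \<rho>) = 1" using c d s1 unfolding cptp_def density_def by simp
  ultimately show ?thesis unfolding density_def by simp
qed

lemma prop_peel: "propagate T u k (Suc m) \<rho> = T (u k) (propagate T u (k - 1) m \<rho>)"
proof (induction m arbitrary: k \<rho>)
  case 0
  then show ?case by simp
next
  case (Suc m)
  have "propagate T u k (Suc (Suc m)) \<rho> = propagate T u k (Suc m) (T (u (k - int (Suc (Suc m)))) \<rho>)" by simp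
  also have "\<dots> = T (u k) (propagate T u (k - 1) m (T (u (k - int (Suc (Suc m)))) \<rho>))" by (rule Suc)
  also have "k - int (Suc (Suc m)) = k - 1 - int (Suc m)" by simp
  finally show ?case by simp
qed

lemma prop_split: "propagate T u k (m + Suc p) \<rho> = propagate T u k m (propagate T u (k - int (Suc m)) p \<rho>)"
proof (induction p arbitrary: \<rho>)
  case 0
  then show ?case by simp
next
  case (Suc p)
  have "propagate T u k (m + Suc (Suc p)) \<rho> = propagate T u k (m + Suc p) (T (u (k - int (Suc (m + Suc p)))) \<rho>)"
    by simp
  also have "\<dots> = propagate T u k m (propagate T u (k - int (Suc m)) p (T (u (k - int (Suc (m + Suc p)))) \<rho>))"
    by (rule Suc)
  also have "k - int (Suc (m + Suc p)) = k - int (Suc m) - int (Suc p)" by simp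
  finally show ?case by simp
qed

locale qs =
  fixes N :: nat and T :: "real \<Rightarrow> cmat \<Rightarrow> cmat" and X :: "real set" and q :: real
  assumes N1: "N \<ge> 1" and cp: "\<forall>x\<in>X. cptp N (T x)" and q0: "0 \<le> q" and q1: "q < 1"
    and contr: "\<forall>x\<in>X. \<forall>A. hermitian N A \<and> mtrace N A = 0 \<and> A \<noteq> (\<lambda>i j. 0)
                  \<longrightarrow> hs_norm N (T x A) / hs_norm N A \<le> q"
begin

lemma T_density: "x \<in> X \<Longrightarrow> density N \<rho> \<Longrightarrow> density N (T x \<rho>)"
  using cptp_density cp by blast

lemma T_contr:
  assumes x: "x \<in> X" and d1: "density N \<rho>" and d2: "density N \<sigma>"
  shows "hs_norm N (\<lambda>i j. T x \<rho> i j - T x \<sigma> i j) \<le> q * hs_norm N (\<lambda>i j. \<rho> i j - \<sigma> i j)"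
proof -
  define A where "A = (\<lambda>i j. \<rho> i j - \<sigma> i j)"
  have c: "cptp N (T x)" using cp x by blast
  have s1: "sq_mat N \<rho>" "sq_mat N \<sigma>" using density_sq d1 d2 by blast+
  have sA: "sq_mat N A" unfolding A_def by (rule sq_diff[OF s1])
  have TA: "T x A = (\<lambda>i j. T x \<rho> i j - T x \<sigma> i j)" unfolding A_def by (rule cptp_diff[OF c s1])
  show ?thesis
  proof (cases "A = (\<lambda>i j. 0)")
    case True
    have "T x A = (\<lambda>i j. 0)" using True cptp_zero[OF c] by simp
    hence "(\<lambda>i j. T x \<rho> i j - T x \<sigma> i j) = (\<lambda>i j. 0)" using TA by simp
    thus ?thesis using q0 hs_nonneg[of N "\<lambda>i j. \<rho> i j - \<sigma> i j"] by (simp add: hs_zero)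
  next
    case False
    have mA: "madj A = A"
      unfolding madj_def A_def using density_herm[OF d1] density_herm[OF d2]
      by (intro ext) (metis complex_cnj_cnj complex_cnj_diff)
    have tA: "mtrace N A = 0" unfolding A_def mtrace_def using d1 d2 unfolding density_def mtrace_def
      by (simp add: sum_subtractf)
    have "hs_norm N (T x A) / hs_norm N A \<le> q"
      using contr x sA mA tA False unfolding hermitian_def by blast
    moreover have "0 < hs_norm N A" by (rule hs_pos[OF sA False])
    ultimately have "hs_norm N (T x A) \<le> q * hs_norm N A" by (simp add: divide_le_eq)
    then show ?thesis unfolding TA by (simp add: A_def)
  qed
qed

lemma prop_density:
  assumes u: "\<forall>k\<le>0. u k \<in> X" and k: "k \<le> 0" and d: "density N \<rho>"
  shows "density N (propagate T u k m \<rho>)"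
  using d
proof (induction m arbitrary: \<rho>)
  case 0
  then show ?case using u k T_density by simp
next
  case (Suc m)
  have "density N (T (u (k - int (Suc m))) \<rho>)" using u k Suc.prems T_density by simp
  then show ?case using Suc.IH by simp
qed

lemma prop_contr:
  assumes u: "\<forall>k\<le>0. u k \<in> X" and k: "k \<le> 0" and d1: "density N \<rho>" and d2: "density N \<sigma>"
  shows "hs_norm N (\<lambda>i j. propagate T u k m \<rho> i j - propagate T u k m \<sigma> i j)
          \<le> q ^ Suc m * hs_norm N (\<lambda>i j. \<rho> i j - \<sigma> i j)"
  using d1 d2
proof (induction m arbitrary: \<rho> \<sigma>)
  case 0
  then show ?case using u k T_contr by simp
next
  case (Suc m)
  define x where "x = u (k - int (Suc m))"
  have x: "x \<in> X" using u k x_def by simp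
  have "hs_norm N (\<lambda>i j. propagate T u k (Suc m) \<rho> i j - propagate T u k (Suc m) \<sigma> i j)
     = hs_norm N (\<lambda>i j. propagate T u k m (T x \<rho>) i j - propagate T u k m (T x \<sigma>) i j)"
    by (simp add: x_def)
  also have "\<dots> \<le> q ^ Suc m * hs_norm N (\<lambda>i j. T x \<rho> i j - T x \<sigma> i j)"
    by (rule Suc.IH) (use T_density x Suc.prems in auto)
  also have "\<dots> \<le> q ^ Suc m * (q * hs_norm N (\<lambda>i j. \<rho> i j - \<sigma> i j))"
    by (rule mult_left_mono[OF T_contr[OF x Suc.prems]]) (simp add: q0)
  finally show ?case by (simp add: mult.assoc mult.commute mult.left_commute)
qed

lemma prop_diff:
  assumes u: "\<forall>k\<le>0. u k \<in> X" and v: "\<forall>k\<le>0. v k \<in> X" and d: "density N \<rho>"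
    and E: "\<forall>k\<le>0. \<forall>B. density N B \<longrightarrow> hs_norm N (\<lambda>i j. T (u k) B i j - T (v k) B i j) \<le> E k"
  shows "k \<le> 0 \<Longrightarrow> hs_norm N (\<lambda>i j. propagate T u k m \<rho> i j - propagate T v k m \<rho> i j)
          \<le> (\<Sum>j\<le>m. q ^ j * E (k - int j))"
proof (induction m arbitrary: k)
  case 0
  have "density N (T (v (k - 0)) \<rho>)" using 0 v T_density d by simp
  then show ?case using E 0 d by simp
next
  case (Suc m)
  define A where "A = propagate T u (k - 1) m \<rho>"
  define B where "B = propagate T v (k - 1) m \<rho>"
  have dA: "density N A" unfolding A_def by (rule prop_density[OF u _ d]) (use Suc in simp)
  have dB: "density N B" unfolding B_def by (rule prop_density[OF v _ d]) (use Suc in simp)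
  have uk: "u k \<in> X" using u Suc by simp
  have IH: "hs_norm N (\<lambda>i j. A i j - B i j) \<le> (\<Sum>j\<le>m. q ^ j * E (k - 1 - int j))"
    unfolding A_def B_def by (rule Suc.IH) (use Suc in simp)
  have "hs_norm N (\<lambda>i j. propagate T u k (Suc m) \<rho> i j - propagate T v k (Suc m) \<rho> i j)
      = hs_norm N (\<lambda>i j. T (u k) A i j - T (v k) B i j)"
    unfolding prop_peel A_def B_def ..
  also have "\<dots> \<le> hs_norm N (\<lambda>i j. T (u k) A i j - T (u k) B i j) + hs_norm N (\<lambda>i j. T (u k) B i j - T (v k) B i j)"
    by (rule hs_diff_tri)
  also have "\<dots> \<le> q * hs_norm N (\<lambda>i j. A i j - B i j) + E k"
    using T_contr[OF uk dA dB] E Suc.prems dB by (intro add_mono) auto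
  also have "\<dots> \<le> q * (\<Sum>j\<le>m. q ^ j * E (k - 1 - int j)) + E k"
    using IH q0 by (simp add: mult_left_mono)
  also have "\<dots> = E k + (\<Sum>j\<le>m. q ^ (Suc j) * E (k - int (Suc j)))"
    by (simp add: sum_distrib_left mult.assoc algebra_simps)
  also have "\<dots> = (\<Sum>j\<le>Suc m. q ^ j * E (k - int j))"
    by (subst sum.atMost_Suc_shift) simp
  finally show ?case .
qed

end




context qs begin

lemma qpow_small: "r > 0 \<Longrightarrow> \<exists>M. q ^ M < r"
proof -
  assume r: "r > 0"
  have "(\<lambda>n. q ^ n) \<longlonglongrightarrow> 0" by (rule LIMSEQ_power_zero) (use q0 q1 in simp)
  then have "\<forall>\<^sub>F n in sequentially. q ^ n < r" using r by (simp add: order_tendstoD(2))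
  then show ?thesis by (meson eventually_sequentially order_refl)
qed

lemma qpow_tends: "(\<lambda>m. 2 * real N * q ^ Suc m) \<longlonglongrightarrow> 0"
proof -
  have "(\<lambda>n. q ^ n) \<longlonglongrightarrow> 0" by (rule LIMSEQ_power_zero) (use q0 q1 in simp)
  then have "(\<lambda>m. q ^ Suc m) \<longlonglongrightarrow> 0" by (rule LIMSEQ_Suc)
  then show ?thesis using tendsto_mult_left[of "\<lambda>m. q ^ Suc m" 0 sequentially "2 * real N"] by simp
qed

lemma prop_close:
  assumes u: "\<forall>k\<le>0. u k \<in> X" and d1: "density N \<rho>" and d2: "density N \<sigma>" and i: "i < N" and j: "j < N"
  shows "cmod (propagate T u 0 m \<rho> i j - propagate T u 0 m \<sigma> i j) \<le> 2 * real N * q ^ Suc m"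
proof -
  have "cmod (propagate T u 0 m \<rho> i j - propagate T u 0 m \<sigma> i j)
       \<le> hs_norm N (\<lambda>i j. propagate T u 0 m \<rho> i j - propagate T u 0 m \<sigma> i j)"
    using hs_entry[OF i j, of "\<lambda>i j. propagate T u 0 m \<rho> i j - propagate T u 0 m \<sigma> i j"] by simp
  also have "\<dots> \<le> q ^ Suc m * hs_norm N (\<lambda>i j. \<rho> i j - \<sigma> i j)"
    by (rule prop_contr[OF u _ d1 d2]) simp
  also have "\<dots> \<le> q ^ Suc m * (2 * real N)"
    by (rule mult_left_mono[OF density_dist[OF d1 d2]]) (simp add: q0)
  finally show ?thesis by (simp add: mult.commute)
qed

lemma prop_conv:
  assumes u: "\<forall>k\<le>0. u k \<in> X" and i: "i < N" and j: "j < N"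
  shows "convergent (\<lambda>m. propagate T u 0 m E00 i j)"
proof -
  have dE: "density N E00" by (rule E00_density[OF N1])
  have "Cauchy (\<lambda>m. propagate T u 0 m E00 i j)"
    unfolding Cauchy_altdef2
  proof (intro allI impI)
    fix e :: real assume e: "e > 0"
    have "e / (2 * real N) > 0" using e N1 by simp
    then obtain M where M: "q ^ M < e / (2 * real N)" using qpow_small by blast
    have "dist (propagate T u 0 n E00 i j) (propagate T u 0 M E00 i j) < e" if n: "n \<ge> M" for n
    proof (cases "n = M")
      case True
      then show ?thesis using e by simp
    next
      case False
      define p where "p = n - Suc M"
      have p: "n = M + Suc p" unfolding p_def using n False by arith
      have dP: "density N (propagate T u (0 - int (Suc M)) p E00)"
        by (rule prop_density[OF u _ dE]) simp
      have "dist (propagate T u 0 n E00 i j) (propagate T u 0 M E00 i j)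
          = cmod (propagate T u 0 M (propagate T u (0 - int (Suc M)) p E00) i j - propagate T u 0 M E00 i j)"
        unfolding p prop_split dist_norm ..
      also have "\<dots> \<le> 2 * real N * q ^ Suc M" by (rule prop_close[OF u dP dE i j])
      also have "\<dots> \<le> 2 * real N * q ^ M"
        using q0 q1 by (intro mult_left_mono) (auto simp: mult_left_le_one_le)
      also have "\<dots> < e" using M N1 by (simp add: field_simps)
      finally show ?thesis .
    qed
    then show "\<exists>M. \<forall>n\<ge>M. dist (propagate T u 0 n E00 i j) (propagate T u 0 M E00 i j) < e" by blast
  qed
  then show ?thesis by (simp add: Cauchy_convergent_iff)
qed

definition sig :: "(int \<Rightarrow> real) \<Rightarrow> cmat" where
  "sig u = (\<lambda>i j. if i < N \<and> j < N then lim (\<lambda>m. propagate T u 0 m E00 i j) else 0)"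

lemma sig_sq: "sq_mat N (sig u)"
  unfolding sq_mat_def sig_def by simp

lemma sig_tends:
  assumes u: "\<forall>k\<le>0. u k \<in> X" and d: "\<forall>m. density N (\<rho>s m)" and i: "i < N" and j: "j < N"
  shows "(\<lambda>m. propagate T u 0 m (\<rho>s m) i j) \<longlonglongrightarrow> sig u i j"
proof -
  have dE: "density N E00" by (rule E00_density[OF N1])
  have L: "(\<lambda>m. propagate T u 0 m E00 i j) \<longlonglongrightarrow> sig u i j"
    using prop_conv[OF u i j] i j unfolding sig_def by (simp add: convergent_LIMSEQ_iff)
  have "(\<lambda>m. propagate T u 0 m (\<rho>s m) i j - propagate T u 0 m E00 i j) \<longlonglongrightarrow> 0"
    by (rule Lim_null_comparison[OF _ qpow_tends]) (use prop_close[OF u d[rule_format] dE i j] in auto)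
  from tendsto_add[OF this L] show ?thesis by simp
qed

lemma limit_state_eq:
  assumes u: "\<forall>k\<le>0. u k \<in> X"
  shows "limit_state N T u 0 = sig u"
  unfolding limit_state_def
proof (rule the_equality)
  show "sq_mat N (sig u) \<and> (\<forall>\<rho>s. (\<forall>m. density N (\<rho>s m)) \<longrightarrow> mat_lim N (\<lambda>m. propagate T u 0 m (\<rho>s m)) (sig u))"
    using sig_sq sig_tends[OF u] unfolding mat_lim_def by blast
next
  fix \<sigma> assume h: "sq_mat N \<sigma> \<and> (\<forall>\<rho>s. (\<forall>m. density N (\<rho>s m)) \<longrightarrow> mat_lim N (\<lambda>m. propagate T u 0 m (\<rho>s m)) \<sigma>)"
  have dE: "density N E00" by (rule E00_density[OF N1])
  have ml: "mat_lim N (\<lambda>m. propagate T u 0 m E00) \<sigma>" using h dE by auto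
  show "\<sigma> = sig u"
  proof (intro ext)
    fix i j
    show "\<sigma> i j = sig u i j"
    proof (cases "i < N \<and> j < N")
      case True
      have "(\<lambda>m. propagate T u 0 m E00 i j) \<longlonglongrightarrow> \<sigma> i j" using ml True unfolding mat_lim_def by blast
      moreover have "(\<lambda>m. propagate T u 0 m E00 i j) \<longlonglongrightarrow> sig u i j"
        using sig_tends[OF u, of "\<lambda>_. E00"] dE True by blast
      ultimately show ?thesis by (rule LIMSEQ_unique)
    next
      case False
      then show ?thesis using h sig_sq[of u] unfolding sq_mat_def by auto
    qed
  qed
qed

end




lemma geo1: "0 \<le> (q::real) \<Longrightarrow> q < 1 \<Longrightarrow> (\<Sum>j\<le>m. q ^ j) \<le> 1 / (1 - q)"
proof -
  assume q0: "0 \<le> q" and q1: "q < 1"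
  have "(1 - q) * (\<Sum>j\<le>m. q ^ j) = 1 - q ^ Suc m"
    by (rule sum_gp_basic)
  moreover have "0 \<le> q ^ Suc m" using q0 by simp
  ultimately have "(1 - q) * (\<Sum>j\<le>m. q ^ j) \<le> 1" by simp
  then show ?thesis using q1 by (simp add: field_simps)
qed

lemma geo2: "0 \<le> (q::real) \<Longrightarrow> q < 1 \<Longrightarrow> (\<Sum>j\<le>m. if M < j then q ^ j else 0) \<le> q ^ Suc M / (1 - q)"
proof -
  assume q0: "0 \<le> q" and q1: "q < 1"
  have "(1 - q) * (\<Sum>j\<le>m. if M < j then q ^ j else 0) = (if M < m then q ^ Suc M - q ^ Suc m else 0)"
  proof (induction m)
    case 0
    then show ?case by simp
  next
    case (Suc m)
    have "(1 - q) * (\<Sum>j\<le>Suc m. if M < j then q ^ j else 0)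
      = (1 - q) * (\<Sum>j\<le>m. if M < j then q ^ j else 0) + (1 - q) * (if M < Suc m then q ^ Suc m else 0)"
      by (simp add: distrib_left)
    also have "\<dots> = (if M < m then q ^ Suc M - q ^ Suc m else 0) + (1 - q) * (if M < Suc m then q ^ Suc m else 0)"
      by (simp only: Suc.IH)
    also have "\<dots> = (if M < Suc m then q ^ Suc M - q ^ Suc (Suc m) else 0)"
      by (cases "M < m"; cases "M = m") (auto simp: algebra_simps)
    finally show ?case .
  qed
  moreover have "0 \<le> q ^ Suc m" "0 \<le> q ^ Suc M" using q0 by simp_all
  ultimately have "(1 - q) * (\<Sum>j\<le>m. if M < j then q ^ j else 0) \<le> q ^ Suc M" by auto
  then show ?thesis using q1 by (simp add: field_simps)
qed

context qs begin

lemma sig_diff_bound: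
  assumes u: "\<forall>k\<le>0. u k \<in> X" and v: "\<forall>k\<le>0. v k \<in> X"
    and E: "\<forall>k\<le>0. \<forall>B. density N B \<longrightarrow> hs_norm N (\<lambda>i j. T (u k) B i j - T (v k) B i j) \<le> E k"
    and Bd: "\<forall>m. (\<Sum>j\<le>m. q ^ j * E (- int j)) \<le> C" and i: "i < N" and j: "j < N"
  shows "cmod (sig u i j - sig v i j) \<le> C"
proof -
  have dE: "density N E00" by (rule E00_density[OF N1])
  have Lu: "(\<lambda>m. propagate T u 0 m E00 i j) \<longlonglongrightarrow> sig u i j"
    using sig_tends[OF u, of "\<lambda>_. E00"] dE i j by blast
  have Lv: "(\<lambda>m. propagate T v 0 m E00 i j) \<longlonglongrightarrow> sig v i j"
    using sig_tends[OF v, of "\<lambda>_. E00"] dE i j by blast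
  have L: "(\<lambda>m. cmod (propagate T u 0 m E00 i j - propagate T v 0 m E00 i j)) \<longlonglongrightarrow> cmod (sig u i j - sig v i j)"
    by (intro tendsto_intros Lu Lv)
  have "cmod (propagate T u 0 m E00 i j - propagate T v 0 m E00 i j) \<le> C" for m
  proof -
    have "cmod (propagate T u 0 m E00 i j - propagate T v 0 m E00 i j)
       \<le> hs_norm N (\<lambda>i j. propagate T u 0 m E00 i j - propagate T v 0 m E00 i j)"
      using hs_entry[OF i j, of "\<lambda>i j. propagate T u 0 m E00 i j - propagate T v 0 m E00 i j"] by simp
    also have "\<dots> \<le> (\<Sum>j\<le>m. q ^ j * E (0 - int j))"
      by (rule prop_diff[OF u v dE E]) simp
    also have "\<dots> \<le> C" using Bd by simp
    finally show ?thesis .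
  qed
  then show ?thesis by (intro LIMSEQ_le_const2[OF L]) auto
qed

end




context qs begin

lemma sig_cont:
  assumes cont: "\<forall>\<epsilon>'>0. \<exists>\<delta>>0. \<forall>x\<in>X. \<forall>y\<in>X. \<bar>x - y\<bar> < \<delta> \<longrightarrow>
                  op22 N (\<lambda>A i j. T x A i j - T y A i j) < \<epsilon>'"
    and w: "null_sequence w" and Xb: "\<forall>x\<in>X. \<bar>x\<bar> \<le> L"
    and u: "\<forall>k\<le>0. u k \<in> X" and eta: "\<eta> > 0"
  shows "\<exists>d>0. \<forall>v. (\<forall>k\<le>0. v k \<in> X) \<longrightarrow> wnorm w (\<lambda>k. u k - v k) < d \<longrightarrow>
            (\<forall>i<N. \<forall>j<N. cmod (sig u i j - sig v i j) \<le> \<eta>)"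
proof -
  have Npos: "real N > 0" using N1 by simp
  define e' where "e' = \<eta> * (1 - q) / (2 * real N)"
  have e'0: "e' > 0" unfolding e'_def using eta q1 Npos by simp
  obtain \<delta> where \<delta>0: "\<delta> > 0" and \<delta>: "\<forall>x\<in>X. \<forall>y\<in>X. \<bar>x - y\<bar> < \<delta> \<longrightarrow> op22 N (\<lambda>A i j. T x A i j - T y A i j) < e'"
    using cont e'0 by blast
  have "\<eta> * (1 - q) / (4 * real N) > 0" using eta q1 Npos by simp
  then obtain M where M: "q ^ M < \<eta> * (1 - q) / (4 * real N)" using qpow_small by blast
  have wpos: "\<And>k. 0 < w k" and w1: "\<And>k. w k \<le> 1" and wdec: "decseq w"
    using w unfolding null_sequence_def by auto
  define d where "d = \<delta> * w M"
  have d0: "d > 0" unfolding d_def using \<delta>0 wpos by simp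
  have "\<forall>i<N. \<forall>j<N. cmod (sig u i j - sig v i j) \<le> \<eta>"
    if v: "\<forall>k\<le>0. v k \<in> X" and wn: "wnorm w (\<lambda>k. u k - v k) < d" for v
  proof (intro allI impI)
    fix i j assume i: "i < N" and j: "j < N"
    have bdd: "bdd_above ((\<lambda>k. \<bar>u k - v k\<bar> * w (nat (- k))) ` {..0})"
    proof (rule bdd_aboveI2)
      fix k :: int assume "k \<in> {..0}"
      then have "\<bar>u k\<bar> \<le> L" "\<bar>v k\<bar> \<le> L" using u v Xb by auto
      then have a: "\<bar>u k - v k\<bar> \<le> 2 * L" by simp
      have "\<bar>u k - v k\<bar> * w (nat (- k)) \<le> \<bar>u k - v k\<bar> * 1"
        by (rule mult_left_mono[OF w1]) simp
      then show "\<bar>u k - v k\<bar> * w (nat (- k)) \<le> 2 * L" using a by simp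
    qed
    have close: "\<bar>u (- int l) - v (- int l)\<bar> < \<delta>" if l: "l \<le> M" for l
    proof -
      have "\<bar>u (- int l) - v (- int l)\<bar> * w l = (\<lambda>k. \<bar>u k - v k\<bar> * w (nat (- k))) (- int l)" by simp
      also have "\<dots> \<le> wnorm w (\<lambda>k. u k - v k)"
        unfolding wnorm_def by (rule cSUP_upper[OF _ bdd]) simp
      also have "\<dots> < \<delta> * w M" using wn d_def by simp
      also have "\<dots> \<le> \<delta> * w l" using wdec l \<delta>0 by (simp add: decseq_def)
      finally show ?thesis using wpos[of l] by simp
    qed
    define E where "E = (\<lambda>k. if \<bar>u k - v k\<bar> < \<delta> then real N * e' else 2 * real N)"
    have E: "\<forall>k\<le>0. \<forall>B. density N B \<longrightarrow> hs_norm N (\<lambda>i j. T (u k) B i j - T (v k) B i j) \<le> E k"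
    proof (intro allI impI)
      fix k :: int and B assume k: "k \<le> 0" and dB: "density N B"
      have uk: "u k \<in> X" and vk: "v k \<in> X" using u v k by auto
      show "hs_norm N (\<lambda>i j. T (u k) B i j - T (v k) B i j) \<le> E k"
      proof (cases "\<bar>u k - v k\<bar> < \<delta>")
        case True
        have "hs_norm N (\<lambda>i j. T (u k) B i j - T (v k) B i j) \<le> op22 N (\<lambda>A i j. T (u k) A i j - T (v k) A i j) * hs_norm N B"
          by (rule op22_bound) (use cp uk vk density_sq[OF dB] in auto)
        also have "\<dots> \<le> e' * hs_norm N B"
          by (rule mult_right_mono) (use \<delta> uk vk True hs_nonneg in \<open>auto intro: less_imp_le\<close>)
        also have "\<dots> \<le> e' * real N" by (rule mult_left_mono[OF density_hs_le[OF dB]]) (use e'0 in simp)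
        finally show ?thesis unfolding E_def using True by (simp add: mult.commute)
      next
        case False
        show ?thesis unfolding E_def using False density_dist[OF T_density[OF uk dB] T_density[OF vk dB]] by simp
      qed
    qed
    have Bd: "\<forall>m. (\<Sum>l\<le>m. q ^ l * E (- int l)) \<le> \<eta>"
    proof
      fix m
      have "(\<Sum>l\<le>m. q ^ l * E (- int l)) \<le> (\<Sum>l\<le>m. (real N * e') * q ^ l + (2 * real N) * (if M < l then q ^ l else 0))"
      proof (rule sum_mono)
        fix l assume "l \<in> {..m}"
        have ql: "0 \<le> q ^ l" using q0 by simp
        show "q ^ l * E (- int l) \<le> (real N * e') * q ^ l + (2 * real N) * (if M < l then q ^ l else 0)"
        proof (cases "M < l")
          case True
          have "E (- int l) \<le> real N * e' + 2 * real N" unfolding E_def using e'0 Npos by auto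
          then have "q ^ l * E (- int l) \<le> q ^ l * (real N * e' + 2 * real N)" by (rule mult_left_mono[OF _ ql])
          then show ?thesis using True by (simp add: algebra_simps)
        next
          case False
          then have "E (- int l) = real N * e'" unfolding E_def using close[of l] by simp
          then show ?thesis using False by (simp add: mult.commute)
        qed
      qed
      also have "\<dots> = (real N * e') * (\<Sum>l\<le>m. q ^ l) + (2 * real N) * (\<Sum>l\<le>m. if M < l then q ^ l else 0)"
        by (simp add: sum.distrib sum_distrib_left)
      also have "\<dots> \<le> (real N * e') * (1 / (1 - q)) + (2 * real N) * (q ^ Suc M / (1 - q))"
        using geo1[OF q0 q1, of m] geo2[OF q0 q1, of M m] e'0 Npos
        by (intro add_mono mult_left_mono) auto
      also have "\<dots> \<le> \<eta>"
      proof -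
        have a: "(real N * e') * (1 / (1 - q)) = \<eta> / 2" unfolding e'_def using q1 Npos by (simp add: field_simps)
        have "q ^ Suc M \<le> q ^ M" using q0 q1 by (simp add: mult_left_le_one_le)
        then have "(2 * real N) * (q ^ Suc M / (1 - q)) \<le> (2 * real N) * (q ^ M / (1 - q))"
          using q1 Npos by (intro mult_left_mono divide_right_mono) auto
        also have "\<dots> \<le> \<eta> / 2" using M q1 Npos by (simp add: field_simps)
        finally have b: "(2 * real N) * (q ^ Suc M / (1 - q)) \<le> \<eta> / 2" .
        have "real N * e' * (1 / (1 - q)) + 2 * real N * (q ^ Suc M / (1 - q)) \<le> \<eta> / 2 + \<eta> / 2"
          using a b by (intro add_mono) auto
        then show ?thesis by simp
      qed
      finally show "(\<Sum>l\<le>m. q ^ l * E (- int l)) \<le> \<eta>" .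
    qed
    show "cmod (sig u i j - sig v i j) \<le> \<eta>" by (rule sig_diff_bound[OF u v E Bd i j])
  qed
  with d0 show ?thesis by blast
qed

end




lemma expZ_tends:
  assumes S: "\<forall>a<2 ^ n. \<forall>b<2 ^ n. (\<lambda>k. S k a b) \<longlonglongrightarrow> \<sigma> a b"
  shows "(\<lambda>k. expZ n (S k) i) \<longlonglongrightarrow> expZ n \<sigma> i"
  unfolding expZ_def mtrace_def mmult_def
proof (intro tendsto_Re tendsto_sum)
  fix a assume a: "a \<in> {..<(2::nat) ^ n}"
  have "(\<lambda>k. \<Sum>b<2 ^ n. S k a b * pauliZ n i b a) \<longlonglongrightarrow> (\<Sum>b<2 ^ n. \<sigma> a b * pauliZ n i b a)"
    by (intro tendsto_sum tendsto_mult_right) (use S a in auto)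
  then show "(\<lambda>k. if a < 2 ^ n \<and> a < 2 ^ n then \<Sum>b<2 ^ n. S k a b * pauliZ n i b a else 0)
      \<longlonglongrightarrow> (if a < 2 ^ n \<and> a < 2 ^ n then \<Sum>b<2 ^ n. \<sigma> a b * pauliZ n i b a else 0)"
    using a by simp
qed

lemma hpoly_tends:
  assumes S: "\<forall>a<2 ^ n. \<forall>b<2 ^ n. (\<lambda>k. S k a b) \<longlonglongrightarrow> \<sigma> a b"
  shows "(\<lambda>k. hpoly n R c (S k)) \<longlonglongrightarrow> hpoly n R c \<sigma>"
  unfolding hpoly_def
  by (intro tendsto_sum tendsto_mult_left tendsto_prod tendsto_power expZ_tends[OF S])

theorem lemma3:
  fixes n R :: nat and L \<epsilon> :: real and D :: "real set"
    and c :: "(nat \<Rightarrow> nat) \<Rightarrow> real"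
    and T :: "real \<Rightarrow> cmat \<Rightarrow> cmat"
    and w :: "nat \<Rightarrow> real"
  assumes "n \<ge> 1" and "L > 0" and "compact D"
    and cptp: "\<forall>x\<in>D \<inter> {-L..L}. cptp (2 ^ n) (T x)"
    and eps: "0 < \<epsilon>" "\<epsilon> \<le> 1"
    and contr: "\<forall>x\<in>D \<inter> {-L..L}. \<forall>A. hermitian (2 ^ n) A \<and> mtrace (2 ^ n) A = 0 \<and> A \<noteq> (\<lambda>i j. 0)
                  \<longrightarrow> hs_norm (2 ^ n) (T x A) / hs_norm (2 ^ n) A \<le> 1 - \<epsilon>"
    and cont: "\<forall>\<epsilon>'>0. \<exists>\<delta>>0. \<forall>x\<in>D \<inter> {-L..L}. \<forall>y\<in>D \<inter> {-L..L}. \<bar>x - y\<bar> < \<delta> \<longrightarrow>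
                  op22 (2 ^ n) (\<lambda>A i j. T x A i j - T y A i j) < \<epsilon>'"
    and "null_sequence w"
  shows "w_fading_memory w L D (functionalF n R c T)"
proof -
  define N :: nat where "N = 2 ^ n"
  define X where "X = D \<inter> {-L..L}"
  interpret Q: qs N T X "1 - \<epsilon>"
    by unfold_locales (use cptp contr eps in \<open>auto simp: N_def X_def\<close>)
  have Xb: "\<forall>x\<in>X. \<bar>x\<bar> \<le> L" unfolding X_def by auto
  have adm: "\<forall>k\<le>0. u k \<in> X" if "u \<in> KLminus L D" for u
    using that unfolding KLminus_def X_def by auto
  have Feq: "functionalF n R c T u = hpoly n R c (Q.sig u)" if "u \<in> KLminus L D" for u
    unfolding functionalF_def filterM_def N_def[symmetric] Q.limit_state_eq[OF adm[OF that]] ..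
  show ?thesis
    unfolding w_fading_memory_def
  proof (intro ballI allI impI)
    fix u e assume u: "u \<in> KLminus L D" and e: "(e::real) > 0"
    show "\<exists>d>0. \<forall>v\<in>KLminus L D. wnorm w (\<lambda>k. u k - v k) < d \<longrightarrow> \<bar>functionalF n R c T u - functionalF n R c T v\<bar> < e"
    proof (rule ccontr)
      assume neg: "\<not> ?thesis"
      have "\<forall>k::nat. \<exists>v. v \<in> KLminus L D \<and> wnorm w (\<lambda>k. u k - v k) < inverse (real (Suc k))
              \<and> \<not> \<bar>functionalF n R c T u - functionalF n R c T v\<bar> < e"
      proof
        fix k :: nat
        have "inverse (real (Suc k)) > 0" by simp
        then show "\<exists>v. v \<in> KLminus L D \<and> wnorm w (\<lambda>k. u k - v k) < inverse (real (Suc k))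
              \<and> \<not> \<bar>functionalF n R c T u - functionalF n R c T v\<bar> < e"
          using neg by blast
      qed
      then obtain vs where vsK: "\<And>k. vs k \<in> KLminus L D"
        and vsw: "\<And>k. wnorm w (\<lambda>j. u j - vs k j) < inverse (real (Suc k))"
        and vsF: "\<And>k. \<not> \<bar>functionalF n R c T u - functionalF n R c T (vs k)\<bar> < e"
        by metis
      have conv: "\<forall>a<2 ^ n. \<forall>b<2 ^ n. (\<lambda>k. Q.sig (vs k) a b) \<longlonglongrightarrow> Q.sig u a b"
      proof (intro allI impI)
        fix a b :: nat assume a: "a < 2 ^ n" and b: "b < 2 ^ n"
        show "(\<lambda>k. Q.sig (vs k) a b) \<longlonglongrightarrow> Q.sig u a b"
        proof (rule LIMSEQ_I)
          fix r :: real assume r: "0 < r"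
          obtain d where d0: "d > 0" and d: "\<forall>v. (\<forall>k\<le>0. v k \<in> X) \<longrightarrow> wnorm w (\<lambda>k. u k - v k) < d \<longrightarrow>
              (\<forall>i<N. \<forall>j<N. cmod (Q.sig u i j - Q.sig v i j) \<le> r / 2)"
            using Q.sig_cont[OF cont[folded X_def N_def] \<open>null_sequence w\<close> Xb adm[OF u], of "r / 2"] r by auto
          obtain no where no: "inverse (real (Suc no)) < d" using reals_Archimedean[OF d0] by blast
          have "norm (Q.sig (vs k) a b - Q.sig u a b) < r" if k: "k \<ge> no" for k
          proof -
            have "inverse (real (Suc k)) \<le> inverse (real (Suc no))" using k by (simp add: le_imp_inverse_le)
            then have "wnorm w (\<lambda>j. u j - vs k j) < d" using vsw[of k] no by linarith
            then have "cmod (Q.sig u a b - Q.sig (vs k) a b) \<le> r / 2"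
              using d adm[OF vsK[of k]] a b unfolding N_def by blast
            then show ?thesis using r by (simp add: norm_minus_commute)
          qed
          then show "\<exists>no. \<forall>k\<ge>no. norm (Q.sig (vs k) a b - Q.sig u a b) < r" by blast
        qed
      qed
      have "(\<lambda>k. functionalF n R c T (vs k)) \<longlonglongrightarrow> functionalF n R c T u"
        unfolding Feq[OF vsK] Feq[OF u] by (rule hpoly_tends[OF conv])
      then have "(\<lambda>k. functionalF n R c T (vs k) - functionalF n R c T u) \<longlonglongrightarrow> 0"
        by (simp add: LIM_zero)
      then obtain k where "norm (functionalF n R c T (vs k) - functionalF n R c T u) < e"
        using LIMSEQ_D[OF _ e] by fastforce
      then show False using vsF[of k] by (simp add: abs_minus_commute)
    qed
  qed
qed


end
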